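(* Let $A=(0,0)$, $B=(1,0)$, $C=(1,1)$, $D=(0,1)$ be the vertices of the unit square in the Euclidean plane $\mathbb{R}^2$. There is no point $P$ lying on the boundary of this square (that is, on one of its four edges $AB$, $BC$, $CD$, $DA$) such that the four Euclidean distances $|PA|$, $|PB|$, $|PC|$, $|PD|$ are all rational numbers.
   Context: Distances are ordinary Euclidean distances in $\mathbb{R}^2$. *)

theory Defs
  imports "HOL-Analysis.Analysis"
begin

end

theory Submission
  imports Defs "HOL-Computational_Algebra.Nth_Powers"
begin


lemma coprime_primeI:
  fixes a b :: int
  assumes "\<And>p. prime p \<Longrightarrow> p dvd a \<Longrightarrow> p dvd b \<Longrightarrow> False"
  shows "coprime a b"
proof (rule ccontr)
  assume "\<not> coprime a b"
  then have u: "\<not> is_unit (gcd a b)" by (simp add: coprime_iff_gcd_eq_1)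
  show False
  proof (cases "gcd a b = 0")
    case True
    then have "a = 0" "b = 0" by auto
    moreover have "prime (2::int)" by simp
    ultimately show False using assms by fastforce
  next
    case False
    then obtain p where "p dvd gcd a b" "prime p" using prime_divisor_exists[OF False u] by blast
    then show False using assms by auto
  qed
qed

lemma L4:
  fixes a b w :: int
  assumes "coprime a b" "a > 0" "b > 0" "a*b = w^4"
  shows "\<exists>A. a = A^4"
proof -
  have c: "coprime (nat a) (nat b)" using assms
    by (metis coprime_int_iff int_nat_eq order_less_imp_le)
  have "int (nat a * nat b) = int ((nat \<bar>w\<bar>)^4)" using assms by simp
  then have "nat a * nat b = (nat \<bar>w\<bar>)^4" by linarith
  then have "is_nth_power 4 (nat a * nat b)" by auto
  then have "is_nth_power 4 (nat a)" using is_nth_power_mult_coprime_natD(1)[OF c] assms by simp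
  then obtain y where "nat a = y^4" by (auto elim: is_nth_powerE)
  then have "a = (int y)^4" using assms by (metis int_nat_eq of_nat_power order_less_imp_le)
  thus ?thesis by blast
qed

lemma L4pair:
  fixes a b w :: int
  assumes "coprime a b" "a > 0" "b > 0" "a*b = w^4"
  shows "\<exists>C D. a = C^4 \<and> b = D^4 \<and> coprime C D \<and> \<bar>C*D\<bar> = \<bar>w\<bar> \<and> C \<noteq> 0 \<and> D \<noteq> 0"
proof -
  obtain C where C: "a = C^4" using L4 assms by blast
  obtain D where D: "b = D^4" using L4[of b a w] assms by (auto simp: ac_simps coprime_commute)
  have "coprime C D" using assms(1) C D by simp
  moreover have "\<bar>C*D\<bar>^4 = \<bar>w\<bar>^4" using assms(4) C D by (simp add: power_mult_distrib power_abs)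
  then have "\<bar>C*D\<bar> = \<bar>w\<bar>" by (metis abs_ge_zero power_eq_iff_eq_base zero_less_numeral)
  moreover have "C \<noteq> 0" "D \<noteq> 0" using C D assms by auto
  ultimately show ?thesis using C D by blast
qed

lemma odd_sq8: "odd (x::int) \<Longrightarrow> 8 dvd x^2 - 1"
proof -
  assume "odd x"
  then obtain k where k: "x = 2*k+1" by (meson oddE)
  have "even (k*(k+1))" by simp
  then obtain j where "k*(k+1) = 2*j" by blast
  then have "x^2 - 1 = 8*j" unfolding k by (simp add: algebra_simps power2_eq_square) 
  thus ?thesis by simp
qed

lemma even_sq4: "even (x::int) \<Longrightarrow> 4 dvd x^2"
proof -
  assume "even x" then obtain k where "x = 2*k" by blast
  then have "x^2 = 4*k^2" by (simp add: power2_eq_square)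
  thus ?thesis by simp
qed

lemma H_not_both_odd:
  fixes p q n :: int
  assumes "n^2 = p^4 - 18*p^2*q^2 + q^4" "odd p" "odd q"
  shows False
proof -
  obtain a where a: "p^2 - 1 = 8*a" using odd_sq8[OF assms(2)] by blast
  obtain b where b: "q^2 - 1 = 8*b" using odd_sq8[OF assms(3)] by blast
  have "n^2 = (p^2-q^2)^2 - 16*(p*q)^2" using assms(1) by (simp add: algebra_simps power2_eq_square power4_eq_xxxx)
  also have "p^2 - q^2 = 8*(a-b)" using a b by simp
  finally have n2: "n^2 = 16*(4*(a-b)^2 - (p*q)^2)" by (simp add: algebra_simps power2_eq_square)
  then have "even (n^2)" by simp
  then have "even n" by simp
  then obtain n1 where n1: "n = 2*n1" by blast
  then have "n1^2 = 4*(4*(a-b)^2 - (p*q)^2)" using n2 by (simp add: power2_eq_square)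
  then have "even (n1^2)" by simp
  then have "even n1" by simp
  then obtain n2 where n2': "n1 = 2*n2" by blast
  have e: "n2^2 + (p*q)^2 = 4*(a-b)^2" using \<open>n1^2 = _\<close> n2' by (simp add: power2_eq_square algebra_simps)
  have "odd (p*q)" using assms by simp
  then obtain c where c: "(p*q)^2 - 1 = 8*c" using odd_sq8 by blast
  have "(\<exists>d. n2^2 = 4*d) \<or> (\<exists>d. n2^2 - 1 = 8*d)"
    by (cases "even n2") (use even_sq4 odd_sq8 in blast)+
  moreover have "\<And>X Y Z::int. X + Y = 4*Z \<Longrightarrow> Y - 1 = 8*c \<Longrightarrow> (\<exists>d. X = 4*d) \<or> (\<exists>d. X - 1 = 8*d) \<Longrightarrow> False"
    by presburger
  ultimately show False using e c by blast
qed

lemma split20: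
  fixes x y q :: int
  assumes cop: "coprime x y" and pos: "x > 0" "y > 0" and xy: "x*y = 20*q^4" and par: "even x" "odd y"
  shows "\<exists>A B. coprime A B \<and> odd B \<and> A\<noteq>0 \<and> B\<noteq>0 \<and> \<bar>A*B\<bar> = \<bar>q\<bar> \<and> (x + y = 20*A^4 + B^4 \<or> x + y = 4*A^4 + 5*B^4)"
proof -
  have c4: "coprime 4 y" using par by (metis coprime_power_left_iff coprime_left_2_iff_odd power2_eq_square numeral_Bit0 mult_2 numeral_times_numeral semiring_norm(12) power2_eq_square)
  have "4 dvd x*y" using xy by simp
  then have "4 dvd x" using c4 by (simp add: coprime_dvd_mult_left_iff)
  then obtain x1 where x1: "x = 4*x1" by blast
  have x1y: "x1*y = 5*q^4" using xy x1 by simp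
  have p5: "prime (5::int)" by simp
  have "5 dvd x1*y" using x1y by simp
  then have "5 dvd x1 \<or> 5 dvd y" using p5 prime_dvd_mult_iff by blast
  then show ?thesis
  proof
    assume "5 dvd x1"
    then obtain x2 where x2: "x1 = 5*x2" by blast
    have "x2*y = q^4" using x1y x2 by simp
    moreover have "coprime x2 y" using cop x1 x2 by simp
    moreover have "x2 > 0" using pos x1 x2 by simp
    ultimately obtain A B where AB: "x2 = A^4" "y = B^4" "coprime A B" "\<bar>A*B\<bar> = \<bar>q\<bar>" "A\<noteq>0" "B\<noteq>0"
      using L4pair pos by blast
    have "odd B" using par AB by simp
    moreover have "x + y = 20*A^4 + B^4" using x1 x2 AB by simp
    ultimately show ?thesis using AB by blast
  next
    assume "5 dvd y"
    then obtain y1 where y1: "y = 5*y1" by blast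
    have "x1*y1 = q^4" using x1y y1 by simp
    moreover have "coprime x1 y1" using cop x1 y1 by simp
    moreover have "x1 > 0" "y1 > 0" using pos x1 y1 by simp_all
    ultimately obtain A B where AB: "x1 = A^4" "y1 = B^4" "coprime A B" "\<bar>A*B\<bar> = \<bar>q\<bar>" "A\<noteq>0" "B\<noteq>0"
      using L4pair by blast
    have "odd B" using par AB y1 by simp
    moreover have "x + y = 4*A^4 + 5*B^4" using x1 y1 AB by simp
    ultimately show ?thesis using AB by blast
  qed
qed

lemma odd_dvd_2pow: "odd (r::int) \<Longrightarrow> r dvd 2^k*a \<Longrightarrow> r dvd a"
  by (metis coprime_dvd_mult_right_iff coprime_power_right_iff coprime_right_2_iff_odd)

lemma dvd_odd_odd: "(r::int) dvd x \<Longrightarrow> odd x \<Longrightarrow> odd r"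
  by (meson dvd_trans)

lemma pos_both: "(x::int)*y > 0 \<Longrightarrow> x + y > 0 \<Longrightarrow> x > 0 \<and> y > 0"
  by (smt (verit) zero_less_mult_iff)

lemma K3:
  fixes A B p :: int
  assumes cop: "coprime A B" and oB: "odd B" and eq: "p^2 = 4*A^4 + 9*A^2*B^2 + 5*B^4"
  shows "\<exists>C D n'. coprime C D \<and> C\<noteq>0 \<and> D\<noteq>0 \<and> n'^2 = C^4 - 18*C^2*D^2 + D^4 \<and> \<bar>C*D\<bar> = \<bar>B\<bar>"
proof -
  define S where "S = 8*A^2 + 9*B^2"
  define x where "x = S - 4*p"
  define y where "y = S + 4*p"
  have xy: "x*y = B^4" unfolding x_def y_def S_def using eq by (simp add: algebra_simps power2_eq_square power4_eq_xxxx)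
  have B0: "B \<noteq> 0" using oB by auto
  have "B^4 > 0" using B0 by simp
  then have "x*y > 0" using xy by simp
  moreover have "B^2 > 0" using B0 by simp
  then have "S > 0" unfolding S_def by (simp add: add_nonneg_pos)
  then have "x + y > 0" unfolding x_def y_def by simp
  ultimately have pos: "x > 0" "y > 0" using pos_both[of x y] by blast+
  have oS: "odd S" unfolding S_def using oB by simp
  have ox: "odd x" unfolding x_def using oS by simp
  have "coprime x y"
  proof (rule coprime_primeI)
    fix r assume r: "prime r" "r dvd x" "r dvd y"
    have orr: "odd r" using r(2) ox dvd_odd_odd by blast
    have "x + y = 2^1*S" unfolding x_def y_def by simp
    moreover have "r dvd x + y" using r by simp
    ultimately have "r dvd 2^1*S" by simp
    then have "r dvd S" using odd_dvd_2pow[OF orr] by blast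
    have "r dvd x*y" using r by simp
    then have "r dvd B^4" using xy by simp
    then have rB: "r dvd B" using prime_dvd_power[OF r(1)] by blast
    have "r dvd S - 9*B^2" using \<open>r dvd S\<close> rB by (simp add: power2_eq_square)
    then have "r dvd 2^3*A^2" unfolding S_def by simp
    then have "r dvd A^2" using odd_dvd_2pow[OF orr] by blast
    then have "r dvd A" using prime_dvd_power[OF r(1)] by blast
    then show False using rB cop r(1) coprime_common_divisor not_prime_unit by blast
  qed
  then obtain C D where CD: "x = C^4" "y = D^4" "coprime C D" "\<bar>C*D\<bar> = \<bar>B\<bar>" "C\<noteq>0" "D\<noteq>0"
    using L4pair pos xy by blast
  have "B^2 = (C*D)^2" using CD(4) by (metis power2_abs)
  then have B2: "B^2 = C^2*D^2" by (simp add: power_mult_distrib)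
  have "C^4 + D^4 = 2*S" using CD x_def y_def by simp
  then have "16*A^2 = C^4 + D^4 - 18*B^2" unfolding S_def by simp
  then have "(4*A)^2 = C^4 - 18*C^2*D^2 + D^4" using B2 by (simp add: power_mult_distrib)
  then show ?thesis using CD by blast
qed

lemma K1:
  fixes A B p :: int
  assumes cop: "coprime A B" and oB: "odd B" and A0: "A \<noteq> 0" and eq: "p^2 = 20*A^4 + 9*A^2*B^2 + B^4"
  shows "\<exists>C D n'. coprime C D \<and> C\<noteq>0 \<and> D\<noteq>0 \<and> n'^2 = C^4 - 18*C^2*D^2 + D^4 \<and> \<bar>C*D\<bar> \<le> \<bar>A\<bar>"
proof (cases "odd A")
  case True
  define S where "S = 2*B^2 + 9*A^2"
  define x where "x = S - 2*p"
  define y where "y = S + 2*p"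
  have xy: "x*y = A^4" unfolding x_def y_def S_def using eq by (simp add: algebra_simps power2_eq_square power4_eq_xxxx)
  have "A^4 > 0" using A0 by simp
  then have "x*y > 0" using xy by simp
  moreover have "A^2 > 0" using A0 by simp
  then have "S > 0" unfolding S_def by (simp add: add_nonneg_pos)
  then have "x + y > 0" unfolding x_def y_def by simp
  ultimately have pos: "x > 0" "y > 0" using pos_both[of x y] by blast+
  have oS: "odd S" unfolding S_def using True by simp
  have ox: "odd x" unfolding x_def using oS by simp
  have "coprime x y"
  proof (rule coprime_primeI)
    fix r assume r: "prime r" "r dvd x" "r dvd y"
    have orr: "odd r" using r(2) ox dvd_odd_odd by blast
    have "x + y = 2^1*S" unfolding x_def y_def by simp
    moreover have "r dvd x + y" using r by simp
    ultimately have "r dvd 2^1*S" by simp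
    then have "r dvd S" using odd_dvd_2pow[OF orr] by blast
    have "r dvd x*y" using r by simp
    then have "r dvd A^4" using xy by simp
    then have rA: "r dvd A" using prime_dvd_power[OF r(1)] by blast
    have "r dvd S - 9*A^2" using \<open>r dvd S\<close> rA by (simp add: power2_eq_square)
    then have "r dvd 2^1*B^2" unfolding S_def by simp
    then have "r dvd B^2" using odd_dvd_2pow[OF orr] by blast
    then have "r dvd B" using prime_dvd_power[OF r(1)] by blast
    then show False using rA cop r(1) coprime_common_divisor not_prime_unit by blast
  qed
  then obtain C D where CD: "x = C^4" "y = D^4" "coprime C D" "\<bar>C*D\<bar> = \<bar>A\<bar>" "C\<noteq>0" "D\<noteq>0"
    using L4pair pos xy by blast
  have "A^2 = (C*D)^2" using CD(4) by (metis power2_abs)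
  then have A2: "A^2 = C^2*D^2" by (simp add: power_mult_distrib)
  have "C^4 + D^4 = 2*S" using CD x_def y_def by simp
  then have "4*B^2 = C^4 + D^4 - 18*A^2" unfolding S_def by simp
  then have "(2*B)^2 = C^4 - 18*C^2*D^2 + D^4" using A2 by (simp add: power_mult_distrib)
  then show ?thesis using CD by (intro exI[of _ C] exI[of _ D] exI[of _ "2*B"]) simp
next
  case False
  then obtain A' where A': "A = 2*A'" by blast
  have A'0: "A' \<noteq> 0" using A0 A' by simp
  define S where "S = B^2 + 18*A'^2"
  have p2: "p^2 = S^2 - 4*A'^4" unfolding S_def using eq A' by (simp add: algebra_simps power2_eq_square power4_eq_xxxx)
  have oS: "odd S" unfolding S_def using oB by simp
  have "odd (p^2)" using p2 oS by simp
  then have op: "odd p" by simp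
  have "even (S - p)" using oS op by simp
  then obtain x where x: "S - p = 2*x" by blast
  define y where "y = S - x"
  have y2: "S + p = 2*y" unfolding y_def using x by simp
  have "4*(x*y) = (S-p)*(S+p)" using x y2 by simp
  also have "\<dots> = 4*A'^4" using p2 by (simp add: algebra_simps power2_eq_square)
  finally have xy: "x*y = A'^4" by simp
  have "A'^4 > 0" using A'0 by simp
  then have "x*y > 0" using xy by simp
  moreover have "B^2 > 0" using oB by (simp add: zero_less_power2) (use oB in auto)
  then have "S > 0" unfolding S_def by (simp add: add_pos_nonneg)
  then have "x + y > 0" unfolding y_def by simp
  ultimately have pos: "x > 0" "y > 0" using pos_both[of x y] by blast+
  have "coprime x y"
  proof (rule coprime_primeI)
    fix r assume r: "prime r" "r dvd x" "r dvd y"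
    have "r dvd x + y" using r by simp
    then have "r dvd S" unfolding y_def by simp
    have "r dvd x*y" using r by simp
    then have "r dvd A'^4" using xy by simp
    then have rA: "r dvd A'" using prime_dvd_power[OF r(1)] by blast
    have "r dvd S - 18*A'^2" using \<open>r dvd S\<close> rA by (simp add: power2_eq_square)
    then have "r dvd B^2" unfolding S_def by simp
    then have rB: "r dvd B" using prime_dvd_power[OF r(1)] by blast
    have "r dvd A" using rA A' by simp
    then show False using rB cop r(1) coprime_common_divisor not_prime_unit by blast
  qed
  then obtain C D where CD: "x = C^4" "y = D^4" "coprime C D" "\<bar>C*D\<bar> = \<bar>A'\<bar>" "C\<noteq>0" "D\<noteq>0"
    using L4pair pos xy by blast
  have "A'^2 = (C*D)^2" using CD(4) by (metis power2_abs)
  then have A2: "A'^2 = C^2*D^2" by (simp add: power_mult_distrib)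
  have "C^4 + D^4 = S" using CD y_def by simp
  then have "B^2 = C^4 + D^4 - 18*A'^2" unfolding S_def by simp
  then have "B^2 = C^4 - 18*C^2*D^2 + D^4" using A2 by (simp add: power_mult_distrib)
  moreover have "\<bar>C*D\<bar> \<le> \<bar>A\<bar>" using CD(4) A' by simp
  ultimately show ?thesis using CD by blast
qed
lemma abs_le_mult: "(B::int) \<noteq> 0 \<Longrightarrow> \<bar>A\<bar> \<le> \<bar>A*B\<bar>"
proof -
  assume "B \<noteq> 0"
  then have "1 \<le> \<bar>B\<bar>" by linarith
  then have "\<bar>A\<bar>*1 \<le> \<bar>A\<bar>*\<bar>B\<bar>" by (rule mult_left_mono) auto
  then show ?thesis by (simp add: abs_mult)
qed

lemma H_step:
  fixes p q n :: int
  assumes cop: "coprime p q" and q0: "q \<noteq> 0" and lt: "\<bar>q\<bar> < \<bar>p\<bar>" and eq: "n^2 = p^4 - 18*p^2*q^2 + q^4"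
  shows "\<exists>C D n'. coprime C D \<and> C\<noteq>0 \<and> D\<noteq>0 \<and> n'^2 = C^4 - 18*C^2*D^2 + D^4 \<and> \<bar>C*D\<bar> \<le> \<bar>q\<bar>"
proof -
  have par1: "\<not> (odd p \<and> odd q)" using H_not_both_odd eq by blast
  have par2: "\<not> (even p \<and> even q)"
  proof
    assume "even p \<and> even q"
    then have "2 dvd p" "2 dvd q" by auto
    then have "is_unit (2::int)" using cop coprime_common_divisor by blast
    then show False by simp
  qed
  define P where "P = p^2 - 9*q^2"
  have oP: "odd P" unfolding P_def using par1 par2 by auto
  have "\<bar>q\<bar>^2 < \<bar>p\<bar>^2" by (rule power_strict_mono[OF lt]) auto
  then have qp: "q^2 < p^2" by simp
  have q2: "q^2 > 0" using q0 by simp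
  have eq2: "n^2 = (p^2)^2 - 18*(p^2)*(q^2) + (q^2)^2" using eq by (simp add: power4_eq_xxxx power2_eq_square algebra_simps)
  have Ppos: "P > 0"
  proof (rule ccontr)
    assume "\<not> P > 0"
    then have h: "p^2 \<le> 9*q^2" unfolding P_def by simp
    define a where "a = p^2"
    define b where "b = q^2"
    have hb: "b > 0" "a > b" "a \<le> 9*b" using h qp q2 unfolding a_def b_def by auto
    have "0 \<le> (9*b - a)*(a - b)" using hb by simp
    then have i1: "0 \<le> 10*(a*b) - 9*(b*b) - a*a" by (simp add: algebra_simps)
    have "a*b > 0" using hb by simp
    moreover have "n^2 = a*a - 18*(a*b) + b*b" using eq2 unfolding a_def b_def by (simp add: power2_eq_square)
    moreover have "n^2 \<ge> 0" by simp
    moreover have "b*b > 0" using hb by simp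
    ultimately show False using i1 by linarith
  qed
  have nP: "n^2 = P^2 - 80*q^4" unfolding P_def using eq by (simp add: algebra_simps power2_eq_square power4_eq_xxxx)
  have "odd (n^2)" using nP oP by simp
  then have on: "odd n" by simp
  have "even (P - n)" using oP on by simp
  then obtain x where x: "P - n = 2*x" by blast
  define y where "y = P - x"
  have y2: "P + n = 2*y" unfolding y_def using x by simp
  have "4*(x*y) = (P-n)*(P+n)" using x y2 by simp
  also have "\<dots> = 4*(20*q^4)" using nP by (simp add: algebra_simps power2_eq_square)
  finally have xy: "x*y = 20*q^4" by simp
  have sxy: "x + y = P" unfolding y_def by simp
  have "q^4 > 0" using q0 by simp
  then have "x*y > 0" using xy by simp
  then have pos: "x > 0" "y > 0" using pos_both[of x y] sxy Ppos by auto
  have cxy: "coprime x y"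
  proof (rule coprime_primeI)
    fix r assume r: "prime r" "r dvd x" "r dvd y"
    have rP: "r dvd P" using r sxy by (metis dvd_add)
    have orr: "odd r" using rP oP dvd_odd_odd by blast
    have "r dvd x*y" using r by simp
    then have "r dvd 2^2*(5*q^4)" using xy by simp
    then have "r dvd 5*q^4" using odd_dvd_2pow[OF orr] by blast
    then have "r dvd 5 \<or> r dvd q^4" using r(1) prime_dvd_mult_iff by blast
    then have rq: "r dvd q"
    proof
      assume "r dvd q^4" then show ?thesis using prime_dvd_power[OF r(1)] by blast
    next
      assume "r dvd 5"
      then have r5: "r = 5" using r(1) by (simp add: primes_dvd_imp_eq)
      obtain x' where "x = 5*x'" using r r5 by blast
      moreover obtain y' where "y = 5*y'" using r r5 by blast
      ultimately have "5*(5*(x'*y')) = 5*(4*q^4)" using xy by simp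
      then have "5*(x'*y') = 4*q^4" by simp
      then have "5 dvd 2^2*q^4" by (metis dvd_triv_left power2_eq_square numeral_Bit0 mult_2 numeral_times_numeral semiring_norm(12))
      then have "(5::int) dvd q^4" using odd_dvd_2pow[of 5 2 "q^4"] by simp
      then show ?thesis using r5 prime_dvd_power[OF r(1)] by blast
    qed
    have "r dvd P + 9*q^2" using rP rq by (simp add: power2_eq_square)
    then have "r dvd p^2" unfolding P_def by simp
    then have "r dvd p" using prime_dvd_power[OF r(1)] by blast
    then show False using rq cop r(1) coprime_common_divisor not_prime_unit by blast
  qed
  obtain A B where AB: "coprime A B" "odd B" "A\<noteq>0" "B\<noteq>0" "\<bar>A*B\<bar> = \<bar>q\<bar>"
       "x + y = 20*A^4 + B^4 \<or> x + y = 4*A^4 + 5*B^4"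
  proof (cases "even x")
    case True
    then have "odd y" using oP sxy by auto
    then show ?thesis using split20[OF cxy pos xy True] that by blast
  next
    case False
    then have "even y" using oP sxy by auto
    moreover have "y*x = 20*q^4" using xy by (simp add: mult.commute)
    moreover have "coprime y x" using cxy by (simp add: coprime_commute)
    ultimately show ?thesis using split20[of y x q] pos False that by (auto simp: add.commute)
  qed
  have "q^2 = (A*B)^2" using AB(5) by (metis power2_abs)
  then have q2': "q^2 = A^2*B^2" by (simp add: power_mult_distrib)
  have p2: "p^2 = x + y + 9*A^2*B^2" using sxy q2' unfolding P_def by simp
  have "\<bar>A\<bar> \<le> \<bar>q\<bar>" "\<bar>B\<bar> \<le> \<bar>q\<bar>" using abs_le_mult[OF AB(4), of A] abs_le_mult[OF AB(3), of B] AB(5) by (simp_all add: mult.commute)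
  from AB(6) show ?thesis
  proof
    assume "x + y = 20*A^4 + B^4"
    then have "p^2 = 20*A^4 + 9*A^2*B^2 + B^4" using p2 by simp
    then obtain C D n' where "coprime C D" "C\<noteq>0" "D\<noteq>0" "n'^2 = C^4 - 18*C^2*D^2 + D^4" "\<bar>C*D\<bar> \<le> \<bar>A\<bar>"
      using K1[OF AB(1,2,3)] by blast
    then show ?thesis using \<open>\<bar>A\<bar> \<le> \<bar>q\<bar>\<close> by (meson order_trans)
  next
    assume "x + y = 4*A^4 + 5*B^4"
    then have "p^2 = 4*A^4 + 9*A^2*B^2 + 5*B^4" using p2 by simp
    then obtain C D n' where "coprime C D" "C\<noteq>0" "D\<noteq>0" "n'^2 = C^4 - 18*C^2*D^2 + D^4" "\<bar>C*D\<bar> = \<bar>B\<bar>"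
      using K3[OF AB(1,2)] by blast
    then show ?thesis using \<open>\<bar>B\<bar> \<le> \<bar>q\<bar>\<close> by (metis order_refl)
  qed
qed
lemma H_impossible:
  fixes p q n :: int
  shows "coprime p q \<Longrightarrow> p \<noteq> 0 \<Longrightarrow> q \<noteq> 0 \<Longrightarrow> n^2 = p^4 - 18*p^2*q^2 + q^4 \<Longrightarrow> False"
proof (induction "nat \<bar>p*q\<bar>" arbitrary: p q n rule: less_induct)
  case less
  have main: False if cop: "coprime p q" and q0: "q \<noteq> 0" and lt: "\<bar>q\<bar> < \<bar>p\<bar>"
      and eq: "n^2 = p^4 - 18*p^2*q^2 + q^4" and IH: "\<And>C D n'. nat \<bar>C*D\<bar> < nat \<bar>p*q\<bar> \<Longrightarrow> coprime C D \<Longrightarrow> C \<noteq> 0 \<Longrightarrow> D \<noteq> 0 \<Longrightarrow> n'^2 = C^4 - 18*C^2*D^2 + D^4 \<Longrightarrow> False"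
    for p q n :: int
  proof -
    obtain C D n' where CD: "coprime C D" "C\<noteq>0" "D\<noteq>0" "n'^2 = C^4 - 18*C^2*D^2 + D^4" "\<bar>C*D\<bar> \<le> \<bar>q\<bar>"
      using H_step[OF cop q0 lt eq] by blast
    have "1 \<le> \<bar>q\<bar>" using q0 by linarith
    then have "2 \<le> \<bar>p\<bar>" using lt by linarith
    then have "\<bar>q\<bar>*1 < \<bar>q\<bar>*\<bar>p\<bar>" using q0 by (intro mult_strict_left_mono) auto
    then have "\<bar>C*D\<bar> < \<bar>p*q\<bar>" using CD(5) by (simp add: abs_mult mult.commute)
    then have "nat \<bar>C*D\<bar> < nat \<bar>p*q\<bar>" by (simp only: nat_less_eq_zless abs_ge_zero)
    then show False using IH CD by blast
  qed
  consider "\<bar>q\<bar> < \<bar>p\<bar>" | "\<bar>p\<bar> < \<bar>q\<bar>" | "\<bar>p\<bar> = \<bar>q\<bar>" by linarith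
  then show False
  proof cases
    case 1 then show False using main[OF less.prems(1) less.prems(3) 1 less.prems(4)] less.hyps by blast
  next
    case 2
    have "coprime q p" using less.prems(1) by (simp add: coprime_commute)
    moreover have "n^2 = q^4 - 18*q^2*p^2 + p^4" using less.prems(4) by simp
    moreover have "\<And>C D n'. nat \<bar>C*D\<bar> < nat \<bar>q*p\<bar> \<Longrightarrow> coprime C D \<Longrightarrow> C \<noteq> 0 \<Longrightarrow> D \<noteq> 0 \<Longrightarrow> n'^2 = C^4 - 18*C^2*D^2 + D^4 \<Longrightarrow> False"
    proof -
      fix C D n' :: int
      assume "nat \<bar>C*D\<bar> < nat \<bar>q*p\<bar>" "coprime C D" "C \<noteq> 0" "D \<noteq> 0" "n'^2 = C^4 - 18*C^2*D^2 + D^4"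
      then show False using less.hyps[of C D n'] by (metis mult.commute)
    qed
    ultimately show False using main[of q p n] less.prems(2) 2 by blast
  next
    case 3
    then have "p dvd q" by (metis abs_dvd_iff dvd_refl dvd_abs_iff)
    then have "is_unit p" using less.prems(1) by (metis coprime_common_divisor dvd_refl)
    then have "\<bar>p\<bar> = 1" by simp
    then have "p^2 = 1" "q^2 = 1" using 3 by (metis abs_power2 power2_abs one_power2)+
    then have "n^2 = -16" using less.prems(4) by (simp add: power4_eq_xxxx power2_eq_square)
    then show False by (metis neg_0_le_iff_le zero_le_power2 zero_le_numeral not_numeral_le_zero)
  qed
qed
lemma Gm1_impossible:
  fixes m f n :: int
  assumes cop: "coprime m f" and ne: "m^2 \<noteq> f^2" and eq: "n^2 = 3*m^2*f^2 - m^4 - f^4"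
  shows False
proof -
  have mod4: False if ev: "even a" and od: "odd b" and e: "n^2 = 3*a^2*b^2 - a^4 - b^4" for a b :: int
  proof -
    obtain k where k: "a = 2*k" using ev by blast
    have "n^2 + b^4 = 4*(3*k^2*b^2 - 4*k^4)" using e unfolding k by (simp add: algebra_simps power2_eq_square power4_eq_xxxx)
    moreover have "odd (b^2)" using od by simp
    then obtain c where c: "(b^2)^2 - 1 = 8*c" using odd_sq8 by blast
    moreover have "(\<exists>d. n^2 = 4*d) \<or> (\<exists>d. n^2 - 1 = 8*d)"
      by (cases "even n") (use even_sq4 odd_sq8 in blast)+
    moreover have "\<And>X Y Z::int. X + Y = 4*Z \<Longrightarrow> Y - 1 = 8*c \<Longrightarrow> (\<exists>d. X = 4*d) \<or> (\<exists>d. X - 1 = 8*d) \<Longrightarrow> False"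
      by presburger
    moreover have "(b^2)^2 = b^4" by simp
    ultimately show False by metis
  qed
  have par2: "\<not> (even m \<and> even f)"
  proof
    assume "even m \<and> even f"
    then have "2 dvd m" "2 dvd f" by auto
    then have "is_unit (2::int)" using cop coprime_common_divisor by blast
    then show False by simp
  qed
  have om: "odd m"
  proof
    assume "even m" then have "odd f" using par2 by blast
    then show False using mod4[OF \<open>even m\<close> _ eq] by blast
  qed
  have of: "odd f"
  proof
    assume "even f"
    moreover have "n^2 = 3*f^2*m^2 - f^4 - m^4" using eq by (simp add: algebra_simps)
    ultimately show False using mod4 om by blast
  qed
  have "even (m + f)" using om of by simp
  then obtain p where p: "m + f = 2*p" by blast
  define q where "q = m - p"
  have mq: "m = p + q" "f = p - q" unfolding q_def using p by simp_all
  have H: "n^2 = p^4 - 18*p^2*q^2 + q^4" using eq unfolding mq by (simp add: algebra_simps power2_eq_square power4_eq_xxxx)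
  have "coprime p q"
  proof (rule coprime_primeI)
    fix r assume r: "prime r" "r dvd p" "r dvd q"
    then have "r dvd m" "r dvd f" unfolding mq by simp_all
    then show False using cop r(1) coprime_common_divisor not_prime_unit by blast
  qed
  moreover have "p \<noteq> 0" using ne mq by auto
  moreover have "q \<noteq> 0" using ne mq by auto
  ultimately show False using H_impossible H by blast
qed

lemma G1_step:
  fixes m f n :: int
  assumes cop: "coprime m f" and of: "odd f" and eq: "n^2 = m^4 + 3*m^2*f^2 + f^4"
  shows "\<exists>A B. coprime B A \<and> A \<noteq> 0 \<and> B \<noteq> 0 \<and> (2*m)^2 = B^4 - 6*B^2*A^2 + 5*A^4 \<and> \<bar>A*B\<bar> = \<bar>f\<bar>"
proof -
  define Q where "Q = 2*m^2 + 3*f^2"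
  define x where "x = Q - 2*n"
  define y where "y = Q + 2*n"
  have xy: "x*y = 5*f^4" unfolding x_def y_def Q_def using eq by (simp add: algebra_simps power2_eq_square power4_eq_xxxx)
  have f0: "f \<noteq> 0" using of by auto
  have "f^4 > 0" using f0 by simp
  then have "x*y > 0" using xy by simp
  moreover have "f^2 > 0" using f0 by simp
  then have "Q > 0" unfolding Q_def by (simp add: add_nonneg_pos)
  then have "x + y > 0" unfolding x_def y_def by simp
  ultimately have pos: "x > 0" "y > 0" using pos_both[of x y] by blast+
  have oQ: "odd Q" unfolding Q_def using of by simp
  have ox: "odd x" unfolding x_def using oQ by simp
  have cxy: "coprime x y"
  proof (rule coprime_primeI)
    fix r assume r: "prime r" "r dvd x" "r dvd y"
    have orr: "odd r" using r(2) ox dvd_odd_odd by blast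
    have "x + y = 2^1*Q" unfolding x_def y_def by simp
    moreover have "r dvd x + y" using r by simp
    ultimately have "r dvd 2^1*Q" by simp
    then have rQ: "r dvd Q" using odd_dvd_2pow[OF orr] by blast
    have "r dvd x*y" using r by simp
    then have "r dvd 5*f^4" using xy by simp
    then have "r dvd 5 \<or> r dvd f^4" using r(1) prime_dvd_mult_iff by blast
    then have rf: "r dvd f"
    proof
      assume "r dvd f^4" then show ?thesis using prime_dvd_power[OF r(1)] by blast
    next
      assume "r dvd 5"
      then have r5: "r = 5" using r(1) by (simp add: primes_dvd_imp_eq)
      obtain x' where "x = 5*x'" using r r5 by blast
      moreover obtain y' where "y = 5*y'" using r r5 by blast
      ultimately have "5*(5*(x'*y')) = 5*(f^4)" using xy by simp
      then have "5*(x'*y') = f^4" by simp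
      then have "5 dvd f^4" by (metis dvd_triv_left)
      then show ?thesis using r5 prime_dvd_power[OF r(1)] by blast
    qed
    have "r dvd Q - 3*f^2" using rQ rf by (simp add: power2_eq_square)
    then have "r dvd 2^1*m^2" unfolding Q_def by simp
    then have "r dvd m^2" using odd_dvd_2pow[OF orr] by blast
    then have "r dvd m" using prime_dvd_power[OF r(1)] by blast
    then show False using rf cop r(1) coprime_common_divisor not_prime_unit by blast
  qed
  have p5: "prime (5::int)" by simp
  have "5 dvd x*y" using xy by simp
  then have "5 dvd x \<or> 5 dvd y" using p5 prime_dvd_mult_iff by blast
  then obtain A B where AB: "coprime B A" "A \<noteq> 0" "B \<noteq> 0" "\<bar>A*B\<bar> = \<bar>f\<bar>" "x + y = 5*A^4 + B^4"
  proof
    assume "5 dvd x"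
    then obtain x1 where x1: "x = 5*x1" by blast
    have "x1*y = f^4" using xy x1 by simp
    moreover have "coprime x1 y" using cxy x1 by simp
    moreover have "x1 > 0" using pos x1 by simp
    ultimately obtain A B where "x1 = A^4" "y = B^4" "coprime A B" "\<bar>A*B\<bar> = \<bar>f\<bar>" "A\<noteq>0" "B\<noteq>0"
      using L4pair pos by blast
    then show ?thesis using that x1 by (simp add: coprime_commute)
  next
    assume "5 dvd y"
    then obtain y1 where y1: "y = 5*y1" by blast
    have "x*y1 = f^4" using xy y1 by simp
    moreover have "coprime x y1" using cxy y1 by simp
    moreover have "y1 > 0" using pos y1 by simp
    ultimately obtain B A where "x = B^4" "y1 = A^4" "coprime B A" "\<bar>B*A\<bar> = \<bar>f\<bar>" "B\<noteq>0" "A\<noteq>0"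
      using L4pair pos by blast
    then show ?thesis using that y1 by (simp add: mult.commute)
  qed
  have "f^2 = (A*B)^2" using AB(4) by (metis power2_abs)
  then have f2: "f^2 = A^2*B^2" by (simp add: power_mult_distrib)
  have "x + y = 2*Q" unfolding x_def y_def by simp
  then have "4*m^2 = 5*A^4 + B^4 - 6*f^2" using AB(5) unfolding Q_def by simp
  then have "(2*m)^2 = B^4 - 6*B^2*A^2 + 5*A^4" using f2 by (simp add: power_mult_distrib algebra_simps)
  then show ?thesis using AB by blast
qed
lemma G1_desc:
  fixes m f n :: int
  assumes cop: "coprime m f" and m0: "m \<noteq> 0" and f0: "f \<noteq> 0" and eq: "n^2 = m^4 + 3*m^2*f^2 + f^4"
  shows "\<exists>A B N'. coprime B A \<and> A \<noteq> 0 \<and> B^2 \<noteq> A^2 \<and> N'^2 = B^4 - 6*B^2*A^2 + 5*A^4 \<and> \<bar>A\<bar> < \<bar>m*f\<bar>"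
proof -
  have gen: "\<exists>A B N'. coprime B A \<and> A \<noteq> 0 \<and> B^2 \<noteq> A^2 \<and> N'^2 = B^4 - 6*B^2*A^2 + 5*A^4 \<and> \<bar>A\<bar> < \<bar>m*f\<bar>"
    if cop: "coprime m f" and m0: "m \<noteq> 0" and of: "odd f" and eq: "n^2 = m^4 + 3*m^2*f^2 + f^4"
    for m f :: int
  proof -
    obtain A B where AB: "coprime B A" "A \<noteq> 0" "B \<noteq> 0" "(2*m)^2 = B^4 - 6*B^2*A^2 + 5*A^4" "\<bar>A*B\<bar> = \<bar>f\<bar>"
      using G1_step[OF cop of eq] by blast
    have ne: "B^2 \<noteq> A^2"
    proof
      assume "B^2 = A^2"
      then have "(2*m)^2 = 0" using AB(4) by (simp add: power4_eq_xxxx power2_eq_square)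
      then show False using m0 by simp
    qed
    have lt: "\<bar>A\<bar> < \<bar>m*f\<bar>"
    proof (cases "\<bar>m\<bar> = 1")
      case True
      then have m2: "m^2 = 1" by (metis abs_power2 power2_abs one_power2)
      have B1: "\<bar>B\<bar> \<noteq> 1"
      proof
        assume "\<bar>B\<bar> = 1"
        then have "B^2 = 1" by (metis abs_power2 power2_abs one_power2)
        then have "4 = 1 - 6*A^2 + 5*(A^2)^2" using AB(4) m2 by (simp add: power4_eq_xxxx power2_eq_square)
        moreover have "A^2 \<ge> 1"
        proof -
          have "1 \<le> \<bar>A\<bar>" using AB(2) by linarith
          then have "1*1 \<le> \<bar>A\<bar>*\<bar>A\<bar>" by (intro mult_mono) auto
          then show ?thesis by (simp add: power2_eq_square)
        qed
        ultimately show False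
        proof -
          fix a :: int
          show "4 = 1 - 6*A^2 + 5*(A^2)^2 \<Longrightarrow> A^2 \<ge> 1 \<Longrightarrow> False"
          proof -
            assume h: "4 = 1 - 6*A^2 + 5*(A^2)^2" "A^2 \<ge> 1"
            define a where "a = A^2"
            have ha: "4 = 1 - 6*a + 5*(a*a)" "a \<ge> 1" using h unfolding a_def by (simp_all add: power2_eq_square)
            show False
            proof (cases "a = 1")
              case True then show False using ha by simp
            next
              case False
              then have "a \<ge> 2" using ha by linarith
              then have "a*(5*a - 6) \<ge> 2*4" by (intro mult_mono) auto
              then show False using ha by (simp add: algebra_simps)
            qed
          qed
        qed
      qed
      then have "2 \<le> \<bar>B\<bar>" using AB(3) by linarith
      then have h1: "\<bar>A\<bar>*2 \<le> \<bar>A\<bar>*\<bar>B\<bar>" by (intro mult_left_mono) auto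
      have h2: "\<bar>A\<bar> < \<bar>A\<bar>*2" using AB(2) by simp
      have h3: "\<bar>A\<bar>*\<bar>B\<bar> = \<bar>f\<bar>" using AB(5) by (simp add: abs_mult)
      from h1 h2 h3 have "\<bar>A\<bar> < \<bar>f\<bar>" by linarith
      then show ?thesis using True by (simp add: abs_mult)
    next
      case False
      then have "2 \<le> \<bar>m\<bar>" using m0 by linarith
      have "\<bar>A\<bar> \<le> \<bar>f\<bar>" using abs_le_mult[OF AB(3), of A] AB(5) by simp
      also have "\<bar>f\<bar> < \<bar>m*f\<bar>"
      proof -
        have "\<bar>f\<bar>*1 < \<bar>f\<bar>*\<bar>m\<bar>" using \<open>2 \<le> \<bar>m\<bar>\<close> of by (intro mult_strict_left_mono) auto
        then show ?thesis by (simp add: abs_mult mult.commute)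
      qed
      finally show ?thesis .
    qed
    show ?thesis using AB ne lt by blast
  qed
  show ?thesis
  proof (cases "odd f")
    case True then show ?thesis using gen[OF cop m0 True eq] by blast
  next
    case False
    have om: "odd m"
    proof
      assume "even m"
      then have "2 dvd m" "2 dvd f" using False by auto
      then have "is_unit (2::int)" using cop coprime_common_divisor by blast
      then show False by simp
    qed
    have "coprime f m" using cop by (simp add: coprime_commute)
    moreover have "n^2 = f^4 + 3*f^2*m^2 + m^4" using eq by (simp add: algebra_simps)
    ultimately show ?thesis using gen[of f m] f0 om by (simp add: mult.commute)
  qed
qed
lemma F1_impossible:
  fixes M e N :: int
  shows "coprime M e \<Longrightarrow> e \<noteq> 0 \<Longrightarrow> M^2 \<noteq> e^2 \<Longrightarrow> N^2 = M^4 - 6*M^2*e^2 + 5*e^4 \<Longrightarrow> False"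
proof (induction "nat \<bar>e\<bar>" arbitrary: M e N rule: less_induct)
  case less
  note cop = less.prems(1) and e0 = less.prems(2) and ne = less.prems(3) and eq = less.prems(4)
  define P where "P = M^2 - 3*e^2"
  have NP: "N^2 = P^2 - 4*e^4" unfolding P_def using eq by (simp add: algebra_simps power2_eq_square power4_eq_xxxx)
  have "even (P - N)"
  proof (rule ccontr)
    assume o: "odd (P - N)"
    then have "odd (P + N)" by (metis add_diff_cancel_left' even_add even_diff diff_add_cancel mult_2 add.assoc)
    then have "odd ((P - N)*(P + N))" using o by simp
    moreover have "(P - N)*(P + N) = 4*e^4" using NP by (simp add: algebra_simps power2_eq_square)
    ultimately show False by simp
  qed
  then obtain b where b: "P - N = 2*b" by blast
  define a where "a = P - b"
  have a2: "P + N = 2*a" unfolding a_def using b by simp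
  have "4*(a*b) = (P+N)*(P-N)" using a2 b by simp
  also have "\<dots> = 4*e^4" using NP by (simp add: algebra_simps power2_eq_square)
  finally have ab: "a*b = e^4" by simp
  have sab: "a + b = P" unfolding a_def by simp
  have cab: "coprime a b"
  proof (rule coprime_primeI)
    fix r assume r: "prime r" "r dvd a" "r dvd b"
    have rP: "r dvd P" using r sab by (metis dvd_add)
    have "r dvd a*b" using r by simp
    then have "r dvd e^4" using ab by simp
    then have re: "r dvd e" using prime_dvd_power[OF r(1)] by blast
    have "r dvd P + 3*e^2" using rP re by (simp add: power2_eq_square)
    then have "r dvd M^2" unfolding P_def by simp
    then have "r dvd M" using prime_dvd_power[OF r(1)] by blast
    then show False using re cop r(1) coprime_common_divisor not_prime_unit by blast
  qed
  have e4: "e^4 > 0" using e0 by simp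
  have e2: "e^2 > 0" using e0 by simp
  have fact: "N^2 = (M^2 - e^2)*(M^2 - 5*e^2)" using eq by (simp add: algebra_simps power2_eq_square power4_eq_xxxx)
  consider "M^2 > e^2" | "M^2 < e^2" using ne by linarith
  then show False
  proof cases
    case 1
    have "M^2 \<ge> 5*e^2"
    proof (rule ccontr)
      assume "\<not> M^2 \<ge> 5*e^2"
      then have "(M^2 - e^2)*(M^2 - 5*e^2) < 0" using 1 by (intro mult_pos_neg) auto
      then show False using fact by (metis not_less zero_le_power2)
    qed
    then have Pp: "P > 0" unfolding P_def using e2 by linarith
    have "a*b > 0" using ab e4 by simp
    then have pos: "a > 0" "b > 0" using pos_both[of a b] sab Pp by auto
    obtain m f where mf: "a = m^4" "b = f^4" "coprime m f" "\<bar>m*f\<bar> = \<bar>e\<bar>" "m \<noteq> 0" "f \<noteq> 0"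
      using L4pair[OF cab pos ab] by blast
    have "e^2 = (m*f)^2" using mf(4) by (metis power2_abs)
    then have e2': "e^2 = m^2*f^2" by (simp add: power_mult_distrib)
    have "M^2 = m^4 + 3*m^2*f^2 + f^4" using sab mf e2' unfolding P_def by simp
    then obtain A B N' where ABN: "coprime B A" "A \<noteq> 0" "B^2 \<noteq> A^2" "N'^2 = B^4 - 6*B^2*A^2 + 5*A^4" "\<bar>A\<bar> < \<bar>m*f\<bar>"
      using G1_desc[OF mf(3) mf(5) mf(6)] by blast
    have "nat \<bar>A\<bar> < nat \<bar>e\<bar>" using ABN(5) mf(4) by simp
    moreover have "N'^2 = B^4 - 6*B^2*A^2 + 5*A^4" by (fact ABN(4))
    ultimately show False using less.hyps[of A B N'] ABN by (simp add: algebra_simps)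
  next
    case 2
    then have Pn: "P < 0" unfolding P_def using e2 by linarith
    have "(-a)*(-b) = e^4" using ab by simp
    moreover have "(-a)*(-b) > 0" using ab e4 by simp
    then have pos: "-a > 0" "-b > 0" using pos_both[of "-a" "-b"] sab Pn by auto
    moreover have "coprime (-a) (-b)" using cab by simp
    ultimately obtain m f where mf: "-a = m^4" "-b = f^4" "coprime m f" "\<bar>m*f\<bar> = \<bar>e\<bar>" "m \<noteq> 0" "f \<noteq> 0"
      using L4pair by blast
    have "e^2 = (m*f)^2" using mf(4) by (metis power2_abs)
    then have e2': "e^2 = m^2*f^2" by (simp add: power_mult_distrib)
    have M2: "M^2 = 3*m^2*f^2 - m^4 - f^4" using sab mf e2' unfolding P_def by simp
    have "m^2 \<noteq> f^2"
    proof
      assume mf2: "m^2 = f^2"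
      then have "\<bar>m\<bar> = \<bar>f\<bar>" by (metis abs_power2 power2_abs power2_eq_iff abs_minus_cancel)
      then have "m dvd f" by (metis abs_dvd_iff dvd_refl dvd_abs_iff)
      then have "is_unit m" using mf(3) by (metis coprime_common_divisor dvd_refl)
      then have "\<bar>m\<bar> = 1" by simp
      then have m1: "m^2 = 1" by (metis abs_power2 power2_abs one_power2)
      then have "f^2 = 1" using mf2 by simp
      then have "e^2 = 1" "M^2 = 1" using e2' M2 m1 by (simp_all add: power4_eq_xxxx power2_eq_square)
      then show False using ne by simp
    qed
    then show False using Gm1_impossible[OF mf(3)] M2 by blast
  qed
qed

lemma int_sqrt_rat:
  fixes w :: real and K e :: int
  assumes "w \<in> \<rat>" "w^2 * (of_int e)^4 = of_int K"
  shows "\<exists>N::int. N^2 = K"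
proof -
  obtain a b :: int where ab: "b > 0" "w = of_int a / of_int b"
    using Rats_cases'[OF assms(1)] by metis
  have "(of_int a / of_int b)^2 * (of_int e)^4 = (of_int K :: real)" using assms(2) ab by simp
  then have "(of_int a)^2 * (of_int e)^4 = (of_int K :: real) * (of_int b)^2"
    using ab(1) by (simp add: field_simps power_divide)
  then have r: "(a*e^2)^2 = K * b^2"
    by (metis (mono_tags, opaque_lifting) of_int_eq_iff of_int_mult of_int_power power_mult_distrib power_mult mult_numeral_1 num_double numeral_times_numeral)
  then have "b^2 dvd (a*e^2)^2" by simp
  then have "b dvd a*e^2" by simp
  then obtain N where N: "a*e^2 = b*N" by blast
  then have "b^2 * N^2 = b^2 * K" using r by (simp add: power_mult_distrib mult.commute)
  then have "N^2 = K" using ab(1) by simp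
  then show ?thesis by blast
qed

lemma core:
  fixes s :: real
  assumes s: "s \<in> \<rat>" and Rq: "sqrt (s^2 + 1) \<in> \<rat>" and Sq: "sqrt ((1 - s)^2 + 1) \<in> \<rat>"
  shows False
proof -
  define R where "R = sqrt (s^2 + 1)"
  define S where "S = sqrt ((1 - s)^2 + 1)"
  have R2: "R^2 = s^2 + 1" unfolding R_def by simp
  have S2: "S^2 = (1 - s)^2 + 1" unfolding S_def by simp
  have R1: "R \<ge> 1" unfolding R_def by simp
  have S1: "S \<ge> 1" unfolding S_def by simp
  define u where "u = R + S"
  define w where "w = (2 * s - 1 + R - S)*(u - 1)"
  have uq: "u \<in> \<rat>" unfolding u_def R_def S_def using Rq Sq by simp
  have wq: "w \<in> \<rat>" unfolding w_def u_def R_def S_def using Rq Sq s by simp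
  have w2: "w^2 = (u^2 - 1)*(u^2 - 5)" unfolding w_def u_def using R2 S2 by algebra
  have u2: "u \<ge> 2" unfolding u_def using R1 S1 by simp
  obtain M e :: int where Me: "e > 0" "coprime M e" "u = of_int M / of_int e"
    using Rats_cases'[OF uq] by metis
  have ue: "u * of_int e = of_int M" using Me by simp
  have "2 * (of_int e :: real) \<le> u * of_int e" using u2 Me(1) by (intro mult_right_mono) auto
  then have "of_int M \<ge> 2 * (of_int e :: real)" using ue by simp
  then have Mge: "M \<ge> 2*e" by linarith
  have "w^2 * (of_int e)^4 = ((u * of_int e)^2 - (of_int e)^2) * ((u * of_int e)^2 - 5*(of_int e)^2)"
    using w2 by algebra
  also have "\<dots> = of_int ((M^2 - e^2)*(M^2 - 5*e^2))" unfolding ue by simp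
  finally obtain N where N: "N^2 = (M^2 - e^2)*(M^2 - 5*e^2)" using int_sqrt_rat[OF wq] by blast
  have "M^2 \<noteq> e^2"
  proof
    assume "M^2 = e^2"
    moreover have "e^2 < M^2" using Mge Me(1) by (intro power_strict_mono) auto
    ultimately show False by simp
  qed
  moreover have "N^2 = M^4 - 6*M^2*e^2 + 5*e^4" using N by (simp add: algebra_simps power2_eq_square power4_eq_xxxx)
  ultimately show False using F1_impossible[OF Me(2)] Me(1) by simp
qed

theorem theorem1:
  fixes P :: "real \<times> real"
  defines "A \<equiv> (0::real, 0::real)" and "B \<equiv> (1::real, 0::real)"
      and "C \<equiv> (1::real, 1::real)" and "D \<equiv> (0::real, 1::real)"
  assumes "P \<in> closed_segment A B \<union> closed_segment B C \<union> closed_segment C D \<union> closed_segment D A"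
  shows "\<not> (dist P A \<in> \<rat> \<and> dist P B \<in> \<rat> \<and> dist P C \<in> \<rat> \<and> dist P D \<in> \<rat>)"
proof
  assume h: "dist P A \<in> \<rat> \<and> dist P B \<in> \<rat> \<and> dist P C \<in> \<rat> \<and> dist P D \<in> \<rat>"
  from assms consider (AB) "P \<in> closed_segment A B" | (BC) "P \<in> closed_segment B C"
    | (CD) "P \<in> closed_segment C D" | (DA) "P \<in> closed_segment D A" by blast
  then show False
  proof cases
    case AB
    then obtain u where u: "0 \<le> u" "u \<le> 1" "P = (1-u) *\<^sub>R A + u *\<^sub>R B" by (auto simp: in_segment)
    then have P: "P = (u, 0)" by (simp add: A_def B_def)
    have "dist P A = u" using u(1,2) by (simp add: P A_def dist_Pair_Pair dist_real_def)
    moreover have "dist P D = sqrt (u^2 + 1)" by (simp add: P D_def dist_Pair_Pair dist_real_def)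
    moreover have "dist P C = sqrt ((1 - u)^2 + 1)" by (simp add: P C_def dist_Pair_Pair dist_real_def power2_commute)
    ultimately show False using h core[of u] by simp
  next
    case BC
    then obtain u where u: "0 \<le> u" "u \<le> 1" "P = (1-u) *\<^sub>R B + u *\<^sub>R C" by (auto simp: in_segment)
    then have P: "P = (1, u)" by (simp add: B_def C_def)
    have "dist P B = u" using u(1,2) by (simp add: P B_def dist_Pair_Pair dist_real_def)
    moreover have "dist P A = sqrt (u^2 + 1)" by (simp add: P A_def dist_Pair_Pair dist_real_def add.commute)
    moreover have "dist P D = sqrt ((1 - u)^2 + 1)" by (simp add: P D_def dist_Pair_Pair dist_real_def power2_commute add.commute)
    ultimately show False using h core[of u] by simp
  next
    case CD
    then obtain u where u: "0 \<le> u" "u \<le> 1" "P = (1-u) *\<^sub>R C + u *\<^sub>R D" by (auto simp: in_segment)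
    then have P: "P = (1 - u, 1)" by (simp add: C_def D_def)
    have "dist P D = 1 - u" using u(1,2) by (simp add: P D_def dist_Pair_Pair dist_real_def)
    moreover have "dist P A = sqrt ((1 - u)^2 + 1)" by (simp add: P A_def dist_Pair_Pair dist_real_def)
    moreover have "dist P B = sqrt ((1 - (1 - u))^2 + 1)" by (simp add: P B_def dist_Pair_Pair dist_real_def)
    ultimately show False using h core[of "1 - u"] by simp
  next
    case DA
    then obtain u where u: "0 \<le> u" "u \<le> 1" "P = (1-u) *\<^sub>R D + u *\<^sub>R A" by (auto simp: in_segment)
    then have P: "P = (0, 1 - u)" by (simp add: D_def A_def)
    have "dist P A = 1 - u" using u(1,2) by (simp add: P A_def dist_Pair_Pair dist_real_def)
    moreover have "dist P B = sqrt ((1 - u)^2 + 1)" by (simp add: P B_def dist_Pair_Pair dist_real_def add.commute)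
    moreover have "dist P C = sqrt ((1 - (1 - u))^2 + 1)" by (simp add: P C_def dist_Pair_Pair dist_real_def add.commute)
    ultimately show False using h core[of "1 - u"] by simp
  qed
qed

end
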